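(* Let $n\geq 3$, $j\in\{2,\dots,n-1\}$, $p\in[0,1)$ and $\lambda\in(0,1)$. Then there exist origin-symmetric convex bodies $K$ and $L$ in $\mathbb R^n$ such that $$V_j\big((1-\lambda)\cdot K+_p\lambda\cdot L\big)<V_j(K)^{1-\lambda}V_j(L)^{\lambda}\leq \Big((1-\lambda)V_j(K)^{p/j}+\lambda V_j(L)^{p/j}\Big)^{j/p},$$ where for $p=0$ the right-most expression is understood as $V_j(K)^{1-\lambda}V_j(L)^\lambda$.
   Context: A convex body is a compact convex subset of $\mathbb R^n$ with nonempty interior; it is (origin-)symmetric if $K=-K$. The support function is $h_K(x)=\max_{y\in K}\langle x,y\rangle$. For a continuous $f:\mathbb S^{n-1}\to(0,\infty)$, its Wulff shape $W(f)$ is the largest convex body whose support function is $\le f$ on $\mathbb S^{n-1}$. For convex bodies $K,L$ containing the origin in their interior, $\lambda\in(0,1)$, the $L_p$-Minkowski combination is $(1-\lambda)\cdot K+_p\lambda\cdot L:=W\big(((1-\lambda)h_K^p+\lambda h_L^p)^{1/p}\big)$ for $p\neq 0$ and $W(h_K^{1-\lambda}h_L^\lambda)$ for $p=0$. The intrinsic volumes $V_0(K),\dots,V_n(K)$ are defined by the Steiner formula $V_n(K+\rho B_2^n)=\sum_{j=0}^n\rho^{n-j}\kappa_{n-j}V_j(K)$ for $\rho>0$, where $V_n$ is volume, $B_2^n$ the Euclidean unit ball and $\kappa_d$ the volume of the $d$-dimensional unit ball. *)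

theory Defs
  imports "HOL-Analysis.Analysis"
begin

definition convex_body :: "'a::euclidean_space set \<Rightarrow> bool" where
  "convex_body K \<longleftrightarrow> compact K \<and> convex K \<and> interior K \<noteq> {}"

definition origin_symmetric :: "'a::euclidean_space set \<Rightarrow> bool" where
  "origin_symmetric K \<longleftrightarrow> uminus ` K = K"

definition support_fun :: "'a::euclidean_space set \<Rightarrow> 'a \<Rightarrow> real" where
  "support_fun K x = (SUP y\<in>K. x \<bullet> y)"

text \<open>Wulff shape: the largest convex body whose support function is bounded by f on
  the unit sphere, i.e. the intersection of the half-spaces x.u <= f u, u on the sphere.\<close>
definition wulff :: "('a::euclidean_space \<Rightarrow> real) \<Rightarrow> 'a set" where
  "wulff f = {x. \<forall>u\<in>sphere 0 1. x \<bullet> u \<le> f u}"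

definition Lp_comb :: "real \<Rightarrow> real \<Rightarrow> 'a::euclidean_space set \<Rightarrow> 'a set \<Rightarrow> 'a set" where
  "Lp_comb p lam K L =
     (if p = 0 then wulff (\<lambda>u. support_fun K u powr (1 - lam) * support_fun L u powr lam)
      else wulff (\<lambda>u. ((1 - lam) * support_fun K u powr p + lam * support_fun L u powr p)
                       powr (1 / p)))"

definition kappa :: "nat \<Rightarrow> real" where
  "kappa d = pi powr (real d / 2) / Gamma (real d / 2 + 1)"

text \<open>Intrinsic volumes V_0..V_n, defined as the coefficients in the Steiner formula
  (set to 0 for indices beyond the dimension, to make them unique).\<close>
definition intrinsic_volume :: "nat \<Rightarrow> 'a::euclidean_space set \<Rightarrow> real" where
  "intrinsic_volume j K =
     (THE V. (\<forall>i>DIM('a). V i = 0) \<and>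
        (\<forall>\<rho>>0. measure lebesgue {x + y | x y. x \<in> K \<and> y \<in> cball 0 \<rho>}
               = (\<Sum>i\<le>DIM('a). \<rho> ^ (DIM('a) - i) * kappa (DIM('a) - i) * V i))) j"

end

theory Submission
  imports Defs
begin
lemma half_ball_integral:
  fixes r :: real and m :: nat
  assumes "r > 0"
  shows "(\<integral>\<^sup>+ y. ennreal (indicator {-r..r} y * sqrt (r\<^sup>2 - y\<^sup>2) ^ m) \<partial>lborel)
          = ennreal (r ^ Suc m * Beta (1/2) (real m / 2 + 1))"
proof -
  have "(\<integral>\<^sup>+ y. ennreal (indicator {-r..r} y * sqrt (r\<^sup>2 - y\<^sup>2) ^ m) \<partial>lborel) =
               (\<integral>\<^sup>+ (y::real). r ^ m * indicator {-1..1} y * (sqrt (1 - y ^ 2)) ^ m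
               \<partial>(distr lborel borel ((*) (1/r))))" using \<open>r > 0\<close>
    by (subst nn_integral_distr)
       (auto simp: indicator_def field_simps real_sqrt_divide power_mult_distrib intro!: nn_integral_cong)
  also have "\<dots> = (\<integral>\<^sup>+ x. ennreal (r ^ Suc m) *
               (indicator {- 1..1} x * sqrt (1 - x\<^sup>2) ^ m) \<partial>lborel)" using \<open>r > 0\<close>
    by (subst lborel_distr_mult) (auto simp: nn_integral_density ennreal_mult' [symmetric] mult_ac)
  also have "\<dots> = ennreal (r ^ Suc m) * (\<integral>\<^sup>+ x. indicator {- 1..1} x *
                    sqrt (1 - x\<^sup>2) ^ m \<partial>lborel)"
    by (subst nn_integral_cmult) auto
  also note emeasure_cball_aux_integral
  finally show ?thesis using \<open>r > 0\<close> by (simp add: ennreal_mult')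
qed

lemma box_slice_integral:
  fixes r a :: real and m :: nat
  assumes r: "r > 0" and a: "a \<ge> 0"
  shows "(\<integral>\<^sup>+ y. ennreal (indicator {-(a+r)..a+r} y * sqrt (r\<^sup>2 - (max (\<bar>y\<bar> - a) 0)\<^sup>2) ^ m) \<partial>lborel)
          = ennreal (2 * a * r ^ m + r ^ Suc m * Beta (1/2) (real m / 2 + 1))"
proof -
  have Bpos: "Beta (1/2) (real m / 2 + 1) > 0"
    unfolding Beta_def by (intro divide_pos_pos mult_pos_pos Gamma_real_pos) auto
  define h where "h u = indicator {-r..r} u * sqrt (r\<^sup>2 - u\<^sup>2) ^ m" for u :: real
  have h_nn: "h u \<ge> 0" for u
  proof (cases "u \<in> {-r..r}")
    case True
    then have "0 \<le> (r - u) * (r + u)" by (intro mult_nonneg_nonneg) auto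
    also have "(r - u) * (r + u) = r\<^sup>2 - u\<^sup>2" by (simp add: algebra_simps power2_eq_square)
    finally show ?thesis unfolding h_def by (auto simp: indicator_def)
  qed (auto simp: h_def indicator_def)
  have hm[measurable]: "h \<in> borel_measurable borel" unfolding h_def by measurable
  have pw: "indicator {-(a+r)..a+r} y * sqrt (r\<^sup>2 - (max (\<bar>y\<bar> - a) 0)\<^sup>2) ^ m
      = indicator {-a..a} y * r ^ m + indicator {a<..} y * h (y - a) + indicator {..< -a} y * h (y + a)" for y
  proof -
    consider "y < -a" | "-a \<le> y \<and> y \<le> a" | "a < y" by linarith
    then show ?thesis
    proof cases
      case 1
      then have "max (\<bar>y\<bar> - a) 0 = -(y+a)" using a by auto
      moreover have "(-(y+a))\<^sup>2 = (y + a)\<^sup>2" by (simp add: power2_eq_square algebra_simps)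
      ultimately show ?thesis using 1 a r by (auto simp: h_def indicator_def)
    next
      case 2
      then have "max (\<bar>y\<bar> - a) 0 = 0" by auto
      then show ?thesis using 2 a r by (auto simp: h_def indicator_def)
    next
      case 3
      then have "max (\<bar>y\<bar> - a) 0 = y - a" using a by auto
      then show ?thesis using 3 a r by (auto simp: h_def indicator_def)
    qed
  qed
  have "(\<integral>\<^sup>+ y. ennreal (indicator {-(a+r)..a+r} y * sqrt (r\<^sup>2 - (max (\<bar>y\<bar> - a) 0)\<^sup>2) ^ m) \<partial>lborel)
     = (\<integral>\<^sup>+ y. ennreal (indicator {-a..a} y * r ^ m) + ennreal (indicator {a<..} y * h (y - a))
            + ennreal (indicator {..< -a} y * h (y + a)) \<partial>lborel)"
  proof (intro nn_integral_cong)
    fix y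
    have n1: "0 \<le> indicator {-a..a} y * r ^ m" using r by simp
    have n2: "0 \<le> indicator {a<..} y * h (y - a)" using h_nn by simp
    have n3: "0 \<le> indicator {..< -a} y * h (y + a)" using h_nn by simp
    show "ennreal (indicator {-(a+r)..a+r} y * sqrt (r\<^sup>2 - (max (\<bar>y\<bar> - a) 0)\<^sup>2) ^ m)
      = ennreal (indicator {-a..a} y * r ^ m) + ennreal (indicator {a<..} y * h (y - a))
            + ennreal (indicator {..< -a} y * h (y + a))"
      unfolding pw using n1 n2 n3 by (simp add: ennreal_plus)
  qed
  also have "\<dots> = (\<integral>\<^sup>+ y. ennreal (indicator {-a..a} y * r ^ m) \<partial>lborel)
      + (\<integral>\<^sup>+ y. ennreal (indicator {a<..} y * h (y - a)) \<partial>lborel)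
      + (\<integral>\<^sup>+ y. ennreal (indicator {..< -a} y * h (y + a)) \<partial>lborel)"
    by (subst nn_integral_add, simp_all, subst nn_integral_add, simp_all)
  also have "(\<integral>\<^sup>+ y. ennreal (indicator {-a..a} y * r ^ m) \<partial>lborel) = ennreal (2 * a * r ^ m)"
  proof -
    have "(\<integral>\<^sup>+ y. ennreal (indicator {-a..a} y * r ^ m) \<partial>lborel)
        = (\<integral>\<^sup>+ y. ennreal (r ^ m) * indicator {-a..a} y \<partial>lborel)"
      by (intro nn_integral_cong) (auto simp: indicator_def)
    also have "\<dots> = ennreal (r ^ m) * emeasure lborel {-a..a}"
      by (rule nn_integral_cmult_indicator) simp
    also have "\<dots> = ennreal (2 * a * r ^ m)" using a r
      by (simp add: ennreal_mult'[symmetric] mult_ac)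
    finally show ?thesis .
  qed
  also have "(\<integral>\<^sup>+ y. ennreal (indicator {a<..} y * h (y - a)) \<partial>lborel)
      = (\<integral>\<^sup>+ y. ennreal (indicator {0<..} y * h y) \<partial>lborel)"
    by (subst nn_integral_real_affine[where c = 1 and t = a]) (auto simp: indicator_def)
  also have "(\<integral>\<^sup>+ y. ennreal (indicator {..< -a} y * h (y + a)) \<partial>lborel)
      = (\<integral>\<^sup>+ y. ennreal (indicator {..<0} y * h y) \<partial>lborel)"
    by (subst nn_integral_real_affine[where c = 1 and t = "-a"]) (auto simp: indicator_def)
  also have "ennreal (2 * a * r ^ m) + (\<integral>\<^sup>+ y. ennreal (indicator {0<..} y * h y) \<partial>lborel)
      + (\<integral>\<^sup>+ y. ennreal (indicator {..<0} y * h y) \<partial>lborel)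
      = ennreal (2 * a * r ^ m) + ((\<integral>\<^sup>+ y. ennreal (indicator {0<..} y * h y) \<partial>lborel)
      + (\<integral>\<^sup>+ y. ennreal (indicator {..<0} y * h y) \<partial>lborel))" by (simp add: add.assoc)
  also have "(\<integral>\<^sup>+ y. ennreal (indicator {0<..} y * h y) \<partial>lborel)
      + (\<integral>\<^sup>+ y. ennreal (indicator {..<0} y * h y) \<partial>lborel)
      = (\<integral>\<^sup>+ y. ennreal (indicator {0<..} y * h y) + ennreal (indicator {..<0} y * h y) \<partial>lborel)"
    by (subst nn_integral_add) simp_all
  also have "\<dots> = (\<integral>\<^sup>+ y. ennreal (h y) \<partial>lborel)"
  proof (intro nn_integral_cong_AE)
    have "AE y in lborel. y \<notin> {0}"
      by (intro AE_not_in countable_imp_null_set_lborel) auto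
    then show "AE y in lborel. ennreal (indicator {0<..} y * h y) + ennreal (indicator {..<0} y * h y) = ennreal (h y)"
      by eventually_elim (auto simp: indicator_def)
  qed
  also have "(\<integral>\<^sup>+ y. ennreal (h y) \<partial>lborel) = ennreal (r ^ Suc m * Beta (1/2) (real m / 2 + 1))"
    unfolding h_def by (rule half_ball_integral[OF r])
  finally show ?thesis using a r Bpos
    by (subst ennreal_plus) auto
qed


definition PB :: "'b set \<Rightarrow> ('b \<Rightarrow> real) \<Rightarrow> real \<Rightarrow> real" where
  "PB A a r = (\<Sum>S\<in>Pow A. (\<Prod>i\<in>A-S. 2 * a i) * unit_ball_vol (card S) * r ^ card S)"

lemma ubv_Suc: "unit_ball_vol (real m) * Beta (1/2) (real m / 2 + 1) = unit_ball_vol (real (Suc m))"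
  by (auto simp: unit_ball_vol_def Beta_def Gamma_eq_zero_iff field_simps
          Gamma_one_half_real powr_half_sqrt [symmetric] powr_add [symmetric])

lemma PB_insert:
  assumes "finite A" "i \<notin> A"
  shows "PB (insert i A) a r = (\<Sum>S\<in>Pow A. (\<Prod>j\<in>A-S. 2 * a j) *
            (2 * a i * unit_ball_vol (card S) * r ^ card S + unit_ball_vol (Suc (card S)) * r ^ Suc (card S)))"
proof -
  have disj: "Pow A \<inter> insert i ` Pow A = {}" using assms by auto
  have inj: "inj_on (insert i) (Pow A)"
  proof (rule inj_onI)
    fix x y assume "x \<in> Pow A" "y \<in> Pow A" "insert i x = insert i y"
    then show "x = y" using assms(2) insert_ident by (metis PowD subsetD)
  qed
  have "PB (insert i A) a r = (\<Sum>S\<in>Pow A. (\<Prod>j\<in>insert i A-S. 2 * a j) * unit_ball_vol (card S) * r ^ card S)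
      + (\<Sum>S\<in>insert i ` Pow A. (\<Prod>j\<in>insert i A-S. 2 * a j) * unit_ball_vol (card S) * r ^ card S)"
    unfolding PB_def Pow_insert using assms disj by (subst sum.union_disjoint) auto
  also have "(\<Sum>S\<in>insert i ` Pow A. (\<Prod>j\<in>insert i A-S. 2 * a j) * unit_ball_vol (card S) * r ^ card S)
      = (\<Sum>S\<in>Pow A. (\<Prod>j\<in>insert i A - insert i S. 2 * a j) * unit_ball_vol (card (insert i S)) * r ^ card (insert i S))"
    by (subst sum.reindex[OF inj]) simp
  also have "\<dots> = (\<Sum>S\<in>Pow A. (\<Prod>j\<in>A-S. 2 * a j) * unit_ball_vol (Suc (card S)) * r ^ Suc (card S))"
  proof (intro sum.cong refl)
    fix S assume "S \<in> Pow A"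
    then have "finite S" "i \<notin> S" using assms by (auto intro: finite_subset)
    then have "card (insert i S) = Suc (card S)" by simp
    moreover have "insert i A - insert i S = A - S" using assms by auto
    ultimately show "(\<Prod>j\<in>insert i A - insert i S. 2 * a j) * unit_ball_vol (card (insert i S)) * r ^ card (insert i S)
      = (\<Prod>j\<in>A-S. 2 * a j) * unit_ball_vol (Suc (card S)) * r ^ Suc (card S)" by simp
  qed
  also have "(\<Sum>S\<in>Pow A. (\<Prod>j\<in>insert i A-S. 2 * a j) * unit_ball_vol (card S) * r ^ card S)
      = (\<Sum>S\<in>Pow A. (\<Prod>j\<in>A-S. 2 * a j) * (2 * a i * unit_ball_vol (card S) * r ^ card S))"
  proof (intro sum.cong refl)
    fix S assume "S \<in> Pow A"
    then have "insert i A - S = insert i (A - S)" "i \<notin> A - S" using assms by auto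
    then show "(\<Prod>j\<in>insert i A-S. 2 * a j) * unit_ball_vol (card S) * r ^ card S
      = (\<Prod>j\<in>A-S. 2 * a j) * (2 * a i * unit_ball_vol (card S) * r ^ card S)"
      using assms by (simp add: mult_ac)
  qed
  finally show ?thesis by (simp add: sum.distrib[symmetric] algebra_simps)
qed

lemma PB_nonneg: "(\<forall>i\<in>A. 0 \<le> a i) \<Longrightarrow> 0 \<le> r \<Longrightarrow> 0 \<le> PB A a r"
  unfolding PB_def by (intro sum_nonneg mult_nonneg_nonneg prod_nonneg) auto

lemma box_aux:
  fixes A :: "'b set" and a :: "'b \<Rightarrow> real"
  assumes "finite A" "\<forall>i\<in>A. 0 \<le> a i" "r > 0"
  shows "emeasure (Pi\<^sub>M A (\<lambda>_. lborel))
           ({f. (\<Sum>i\<in>A. (max (\<bar>f i\<bar> - a i) 0)\<^sup>2) \<le> r\<^sup>2} \<inter> space (Pi\<^sub>M A (\<lambda>_. lborel)))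
         = ennreal (PB A a r)"
  using assms
proof (induction arbitrary: r)
  case (empty r)
  thus ?case by (simp add: unit_ball_vol_def space_PiM PB_def)
next
  case (insert i A r)
  interpret product_sigma_finite "\<lambda>_. lborel"
    by standard
  define g where "g y = (max (\<bar>y\<bar> - a i) 0)\<^sup>2" for y
  have ai: "0 \<le> a i" using insert.prems by auto
  have aA: "\<forall>j\<in>A. 0 \<le> a j" using insert.prems by auto
  have "emeasure (Pi\<^sub>M (insert i A) (\<lambda>_. lborel))
          ({f. (\<Sum>i\<in>insert i A. (max (\<bar>f i\<bar> - a i) 0)\<^sup>2) \<le> r\<^sup>2} \<inter> space (Pi\<^sub>M (insert i A) (\<lambda>_. lborel)))
      = nn_integral (Pi\<^sub>M (insert i A) (\<lambda>_. lborel))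
          (indicator ({f. (\<Sum>i\<in>insert i A. (max (\<bar>f i\<bar> - a i) 0)\<^sup>2) \<le> r\<^sup>2} \<inter> space (Pi\<^sub>M (insert i A) (\<lambda>_. lborel))))"
    by (subst nn_integral_indicator) auto
  also have "\<dots> = (\<integral>\<^sup>+ y. \<integral>\<^sup>+ x. indicator ({f. (\<Sum>i\<in>insert i A. (max (\<bar>f i\<bar> - a i) 0)\<^sup>2) \<le> r\<^sup>2} \<inter>
                                space (Pi\<^sub>M (insert i A) (\<lambda>_. lborel))) (x(i := y))
                   \<partial>Pi\<^sub>M A (\<lambda>_. lborel) \<partial>lborel)"
    using insert.prems insert.hyps by (subst product_nn_integral_insert_rev) auto
  also have "\<dots> = (\<integral>\<^sup>+ (y::real). \<integral>\<^sup>+ x. indicator {-(a i + r)..a i + r} y *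
        indicator ({f. (\<Sum>i\<in>A. (max (\<bar>f i\<bar> - a i) 0)\<^sup>2) \<le> r\<^sup>2 - g y} \<inter> space (Pi\<^sub>M A (\<lambda>_. lborel))) x
        \<partial>Pi\<^sub>M A (\<lambda>_. lborel) \<partial>lborel)"
  proof (intro nn_integral_cong, goal_cases)
    case (1 y f)
    have s: "(\<Sum>x\<in>A. (max (\<bar>(if x = i then y else f x)\<bar> - a x) 0)\<^sup>2) = (\<Sum>x\<in>A. (max (\<bar>f x\<bar> - a x) 0)\<^sup>2)"
      using insert.hyps by (intro sum.cong) auto
    have *: "y \<in> {-(a i + r)..a i + r}" if "(max (\<bar>y\<bar> - a i) 0)\<^sup>2 + c \<le> r\<^sup>2" "c \<ge> 0" for c
    proof -
      have "(max (\<bar>y\<bar> - a i) 0)\<^sup>2 \<le> r\<^sup>2" using that by linarith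
      then have "max (\<bar>y\<bar> - a i) 0 \<le> r" using insert.prems
        by (simp add: power2_le_iff_abs_le)
      then show ?thesis by auto
    qed
    have nn: "0 \<le> (\<Sum>x\<in>A. (max (\<bar>f x\<bar> - a x) 0)\<^sup>2)" by (intro sum_nonneg) auto
    show ?case using 1 insert.hyps s nn
      by (auto simp: indicator_def PiE_def space_PiM g_def dest!: *)
  qed
  also have "\<dots> = (\<integral>\<^sup>+ (y::real). indicator {-(a i + r)..a i + r} y * (\<integral>\<^sup>+ x.
        indicator ({f. (\<Sum>i\<in>A. (max (\<bar>f i\<bar> - a i) 0)\<^sup>2) \<le> r\<^sup>2 - g y} \<inter> space (Pi\<^sub>M A (\<lambda>_. lborel))) x
        \<partial>Pi\<^sub>M A (\<lambda>_. lborel)) \<partial>lborel)"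
    by (subst nn_integral_cmult) auto
  also have "\<dots> = (\<integral>\<^sup>+ (y::real). indicator {-(a i + r)..a i + r} y * emeasure (Pi\<^sub>M A (\<lambda>_. lborel))
        ({f. (\<Sum>i\<in>A. (max (\<bar>f i\<bar> - a i) 0)\<^sup>2) \<le> r\<^sup>2 - g y} \<inter> space (Pi\<^sub>M A (\<lambda>_. lborel))) \<partial>lborel)"
    using \<open>finite A\<close> by (intro nn_integral_cong, subst nn_integral_indicator) auto
  also have "\<dots> = (\<integral>\<^sup>+ (y::real). ennreal (indicator {-(a i + r)..a i + r} y * PB A a (sqrt (r\<^sup>2 - g y))) \<partial>lborel)"
  proof (intro nn_integral_cong_AE, goal_cases)
    case 1
    have "AE y in lborel. y \<notin> {-(a i + r), a i + r}"
      by (intro AE_not_in countable_imp_null_set_lborel) auto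
    thus ?case
    proof eventually_elim
      case (elim y)
      show ?case
      proof (cases "y \<in> {-(a i + r)<..<a i + r}")
        case True
        then have "max (\<bar>y\<bar> - a i) 0 < r" using insert.prems by auto
        moreover have "0 \<le> max (\<bar>y\<bar> - a i) 0" by simp
        ultimately have "g y < r\<^sup>2" unfolding g_def by (intro power_strict_mono) auto
        then have gp: "0 < r\<^sup>2 - g y" by simp
        then have "(sqrt (r\<^sup>2 - g y))\<^sup>2 = r\<^sup>2 - g y" by simp
        then have "emeasure (Pi\<^sub>M A (\<lambda>_. lborel))
            ({f. (\<Sum>i\<in>A. (max (\<bar>f i\<bar> - a i) 0)\<^sup>2) \<le> r\<^sup>2 - g y} \<inter> space (Pi\<^sub>M A (\<lambda>_. lborel)))
            = ennreal (PB A a (sqrt (r\<^sup>2 - g y)))"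
          using insert.IH[OF aA, of "sqrt (r\<^sup>2 - g y)"] gp by simp
        then show ?thesis using True by (simp add: indicator_def)
      qed (insert elim, auto)
    qed
  qed
  also have "\<dots> = (\<integral>\<^sup>+ (y::real). (\<Sum>S\<in>Pow A. ennreal ((\<Prod>j\<in>A-S. 2 * a j) * unit_ball_vol (card S)) *
       ennreal (indicator {-(a i + r)..a i + r} y * sqrt (r\<^sup>2 - g y) ^ card S)) \<partial>lborel)"
  proof (intro nn_integral_cong)
    fix y :: real
    have eq: "indicator {-(a i + r)..a i + r} y * PB A a (sqrt (r\<^sup>2 - g y))
       = (\<Sum>S\<in>Pow A. ((\<Prod>j\<in>A-S. 2 * a j) * unit_ball_vol (card S)) *
           (indicator {-(a i + r)..a i + r} y * sqrt (r\<^sup>2 - g y) ^ card S))"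
      unfolding PB_def by (simp add: sum_distrib_left mult_ac)
    have X: "\<And>S. 0 \<le> (\<Prod>j\<in>A-S. 2 * a j) * unit_ball_vol (card S)"
      using aA by (intro mult_nonneg_nonneg prod_nonneg) auto
    have Y: "0 \<le> indicator {-(a i + r)..a i + r} y * sqrt (r\<^sup>2 - g y) ^ card S" for S :: "'b set"
    proof (cases "y \<in> {-(a i + r)..a i + r}")
      case True
      then have "max (\<bar>y\<bar> - a i) 0 \<le> r" using insert.prems by auto
      moreover have "0 \<le> max (\<bar>y\<bar> - a i) 0" by simp
      ultimately have "g y \<le> r\<^sup>2" unfolding g_def by (intro power_mono) auto
      then show ?thesis using True by (simp add: indicator_def)
    next
      case False
      then have "indicator {-(a i + r)..a i + r} y = (0::real)" by simp
      then show ?thesis by simp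
    qed
    show "ennreal (indicator {-(a i + r)..a i + r} y * PB A a (sqrt (r\<^sup>2 - g y)))
      = (\<Sum>S\<in>Pow A. ennreal ((\<Prod>j\<in>A-S. 2 * a j) * unit_ball_vol (card S)) *
       ennreal (indicator {-(a i + r)..a i + r} y * sqrt (r\<^sup>2 - g y) ^ card S))"
    proof -
      have "ennreal (indicator {-(a i + r)..a i + r} y * PB A a (sqrt (r\<^sup>2 - g y)))
         = (\<Sum>S\<in>Pow A. ennreal (((\<Prod>j\<in>A-S. 2 * a j) * unit_ball_vol (card S)) *
           (indicator {-(a i + r)..a i + r} y * sqrt (r\<^sup>2 - g y) ^ card S)))"
        unfolding eq by (rule sum_ennreal[symmetric], rule mult_nonneg_nonneg[OF X Y])
      also have "\<dots> = (\<Sum>S\<in>Pow A. ennreal ((\<Prod>j\<in>A-S. 2 * a j) * unit_ball_vol (card S)) *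
       ennreal (indicator {-(a i + r)..a i + r} y * sqrt (r\<^sup>2 - g y) ^ card S))"
        by (intro sum.cong refl ennreal_mult[OF X Y])
      finally show ?thesis .
    qed
  qed
  also have "\<dots> = (\<Sum>S\<in>Pow A. ennreal ((\<Prod>j\<in>A-S. 2 * a j) * unit_ball_vol (card S)) *
       (\<integral>\<^sup>+ (y::real). ennreal (indicator {-(a i + r)..a i + r} y * sqrt (r\<^sup>2 - g y) ^ card S) \<partial>lborel))"
    unfolding g_def by (subst nn_integral_sum) (auto simp: nn_integral_cmult)
  also have "\<dots> = (\<Sum>S\<in>Pow A. ennreal ((\<Prod>j\<in>A-S. 2 * a j) * unit_ball_vol (card S)) *
       ennreal (2 * a i * r ^ card S + r ^ Suc (card S) * Beta (1/2) (real (card S) / 2 + 1)))"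
    unfolding g_def using box_slice_integral[OF insert.prems(2) ai] by simp
  also have "\<dots> = ennreal (\<Sum>S\<in>Pow A. (\<Prod>j\<in>A-S. 2 * a j) * (unit_ball_vol (card S) *
       (2 * a i * r ^ card S + r ^ Suc (card S) * Beta (1/2) (real (card S) / 2 + 1))))"
  proof -
    have Bp: "Beta (1/2) (real m / 2 + 1) > 0" for m :: nat
      unfolding Beta_def by (intro divide_pos_pos mult_pos_pos Gamma_real_pos) auto
    have "\<And>S. 0 \<le> (\<Prod>j\<in>A-S. 2 * a j) * (unit_ball_vol (card S) *
       (2 * a i * r ^ card S + r ^ Suc (card S) * Beta (1/2) (real (card S) / 2 + 1)))"
      using aA ai insert.prems(2) Bp
      by (intro mult_nonneg_nonneg prod_nonneg add_nonneg_nonneg) (auto simp: less_imp_le)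
    moreover have "\<And>S. ennreal ((\<Prod>j\<in>A-S. 2 * a j) * unit_ball_vol (card S)) *
       ennreal (2 * a i * r ^ card S + r ^ Suc (card S) * Beta (1/2) (real (card S) / 2 + 1))
       = ennreal ((\<Prod>j\<in>A-S. 2 * a j) * (unit_ball_vol (card S) *
       (2 * a i * r ^ card S + r ^ Suc (card S) * Beta (1/2) (real (card S) / 2 + 1))))"
    proof -
      fix S :: "'b set"
      have X: "0 \<le> (\<Prod>j\<in>A-S. 2 * a j) * unit_ball_vol (card S)"
        using aA by (intro mult_nonneg_nonneg prod_nonneg) auto
      have Z: "0 \<le> 2 * a i * r ^ card S + r ^ Suc (card S) * Beta (1/2) (real (card S) / 2 + 1)"
        using ai insert.prems(2) Bp[of "card S"] by (intro add_nonneg_nonneg mult_nonneg_nonneg) auto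
      show "ennreal ((\<Prod>j\<in>A-S. 2 * a j) * unit_ball_vol (card S)) *
       ennreal (2 * a i * r ^ card S + r ^ Suc (card S) * Beta (1/2) (real (card S) / 2 + 1))
       = ennreal ((\<Prod>j\<in>A-S. 2 * a j) * (unit_ball_vol (card S) *
       (2 * a i * r ^ card S + r ^ Suc (card S) * Beta (1/2) (real (card S) / 2 + 1))))"
        by (subst ennreal_mult[OF X Z, symmetric]) (simp add: mult_ac)
    qed
    ultimately show ?thesis by (simp add: sum_ennreal)
  qed
  also have "\<dots> = ennreal (PB (insert i A) a r)"
  proof -
    have "unit_ball_vol (card S) * (2 * a i * r ^ card S + r ^ Suc (card S) * Beta (1/2) (real (card S) / 2 + 1))
        = 2 * a i * unit_ball_vol (card S) * r ^ card S + unit_ball_vol (Suc (card S)) * r ^ Suc (card S)" for S :: "'b set"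
      using ubv_Suc[of "card S"] by (simp add: algebra_simps)
    then show ?thesis using PB_insert[OF insert.hyps] by simp
  qed
  finally show ?case .
qed


definition boxc :: "('a::euclidean_space \<Rightarrow> real) \<Rightarrow> 'a set" where
  "boxc c = {x. \<forall>b\<in>Basis. \<bar>x \<bullet> b\<bar> \<le> c b}"

lemma inner_sum_Basis:
  fixes f :: "'a::euclidean_space \<Rightarrow> real"
  assumes "b \<in> Basis"
  shows "(\<Sum>b'\<in>Basis. f b' *\<^sub>R b') \<bullet> b = f b"
  using assms by (simp add: inner_sum_left inner_Basis if_distrib sum.delta cong: if_cong)

lemma norm_sq_Basis:
  fixes y :: "'a::euclidean_space"
  shows "(norm y)\<^sup>2 = (\<Sum>b\<in>Basis. (y \<bullet> b)\<^sup>2)"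
proof -
  have "(norm y)\<^sup>2 = y \<bullet> y" by (simp add: power2_norm_eq_inner)
  also have "\<dots> = (\<Sum>b\<in>Basis. (y \<bullet> b) * (y \<bullet> b))" by (rule euclidean_inner)
  finally show ?thesis by (simp add: power2_eq_square)
qed

lemma parallel_box:
  fixes c :: "'a::euclidean_space \<Rightarrow> real"
  assumes c: "\<forall>b\<in>Basis. 0 \<le> c b" and rho: "0 \<le> \<rho>"
  shows "{x + y | x y. x \<in> boxc c \<and> y \<in> cball 0 \<rho>}
       = {x. (\<Sum>b\<in>Basis. (max (\<bar>x \<bullet> b\<bar> - c b) 0)\<^sup>2) \<le> \<rho>\<^sup>2}"
proof (intro equalityI subsetI)
  fix z assume "z \<in> {x + y | x y. x \<in> boxc c \<and> y \<in> cball 0 \<rho>}"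
  then obtain x y where z: "z = x + y" and x: "x \<in> boxc c" and y: "norm y \<le> \<rho>"
    by (auto simp: dist_norm)
  have "(\<Sum>b\<in>Basis. (max (\<bar>z \<bullet> b\<bar> - c b) 0)\<^sup>2) \<le> (\<Sum>b\<in>Basis. (y \<bullet> b)\<^sup>2)"
  proof (intro sum_mono)
    fix b :: 'a assume b: "b \<in> Basis"
    have xb: "\<bar>x \<bullet> b\<bar> \<le> c b" using x b by (auto simp: boxc_def)
    have "\<bar>z \<bullet> b\<bar> \<le> \<bar>x \<bullet> b\<bar> + \<bar>y \<bullet> b\<bar>" unfolding z by (simp add: inner_add_left abs_triangle_ineq)
    then have "max (\<bar>z \<bullet> b\<bar> - c b) 0 \<le> \<bar>y \<bullet> b\<bar>" using xb by auto
    then have "(max (\<bar>z \<bullet> b\<bar> - c b) 0)\<^sup>2 \<le> \<bar>y \<bullet> b\<bar>\<^sup>2" by (intro power_mono) auto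
    then show "(max (\<bar>z \<bullet> b\<bar> - c b) 0)\<^sup>2 \<le> (y \<bullet> b)\<^sup>2" by simp
  qed
  also have "\<dots> = (norm y)\<^sup>2" by (simp add: norm_sq_Basis)
  also have "\<dots> \<le> \<rho>\<^sup>2" using y by (intro power_mono) auto
  finally show "z \<in> {x. (\<Sum>b\<in>Basis. (max (\<bar>x \<bullet> b\<bar> - c b) 0)\<^sup>2) \<le> \<rho>\<^sup>2}" by simp
next
  fix z :: 'a assume z: "z \<in> {x. (\<Sum>b\<in>Basis. (max (\<bar>x \<bullet> b\<bar> - c b) 0)\<^sup>2) \<le> \<rho>\<^sup>2}"
  define x where "x = (\<Sum>b\<in>Basis. max (- c b) (min (c b) (z \<bullet> b)) *\<^sub>R b)"
  define y where "y = z - x"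
  have xb: "x \<bullet> b = max (- c b) (min (c b) (z \<bullet> b))" if "b \<in> Basis" for b
    unfolding x_def using that by (rule inner_sum_Basis)
  have "x \<in> boxc c" unfolding boxc_def using xb c by auto
  moreover have "norm y \<le> \<rho>"
  proof -
    have "(norm y)\<^sup>2 = (\<Sum>b\<in>Basis. (y \<bullet> b)\<^sup>2)" by (rule norm_sq_Basis)
    also have "\<dots> = (\<Sum>b\<in>Basis. (max (\<bar>z \<bullet> b\<bar> - c b) 0)\<^sup>2)"
    proof (intro sum.cong refl)
      fix b :: 'a assume b: "b \<in> Basis"
      have "y \<bullet> b = z \<bullet> b - max (- c b) (min (c b) (z \<bullet> b))"
        unfolding y_def using xb[OF b] by (simp add: inner_diff_left)
      moreover have "\<bar>z \<bullet> b - max (- c b) (min (c b) (z \<bullet> b))\<bar> = max (\<bar>z \<bullet> b\<bar> - c b) 0"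
        using c b by (auto simp: abs_if max_def min_def)
      ultimately show "(y \<bullet> b)\<^sup>2 = (max (\<bar>z \<bullet> b\<bar> - c b) 0)\<^sup>2"
        by (metis power2_abs)
    qed
    also have "\<dots> \<le> \<rho>\<^sup>2" using z by simp
    finally show ?thesis using rho by (simp add: power2_le_iff_abs_le)
  qed
  moreover have "z = x + y" unfolding y_def by simp
  ultimately show "z \<in> {x + y | x y. x \<in> boxc c \<and> y \<in> cball 0 \<rho>}"
    by (auto simp: dist_norm)
qed

lemma measure_parallel_box:
  fixes c :: "'a::euclidean_space \<Rightarrow> real"
  assumes c: "\<forall>b\<in>Basis. 0 \<le> c b" and rho: "0 < \<rho>"
  shows "measure lebesgue {x + y | x y. x \<in> boxc c \<and> y \<in> cball 0 \<rho>} = PB Basis c \<rho>"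
proof -
  define T where "T = {x::'a. (\<Sum>b\<in>Basis. (max (\<bar>x \<bullet> b\<bar> - c b) 0)\<^sup>2) \<le> \<rho>\<^sup>2}"
  have closed: "closed T" unfolding T_def
    by (intro closed_Collect_le continuous_intros)
  then have Tb: "T \<in> sets lborel" by simp
  have "emeasure lborel T = emeasure (distr (Pi\<^sub>M Basis (\<lambda>_. lborel)) borel (\<lambda>f. \<Sum>b\<in>Basis. f b *\<^sub>R b)) T"
    by (subst lborel_eq) rule
  also have "\<dots> = emeasure (Pi\<^sub>M Basis (\<lambda>_. lborel))
      ((\<lambda>f. \<Sum>b\<in>Basis. f b *\<^sub>R b) -` T \<inter> space (Pi\<^sub>M Basis (\<lambda>_. lborel)))"
    using Tb by (subst emeasure_distr) auto
  also have "(\<lambda>f. \<Sum>b\<in>Basis. f b *\<^sub>R b) -` T = {f. (\<Sum>i\<in>Basis. (max (\<bar>f i\<bar> - c i) 0)\<^sup>2) \<le> \<rho>\<^sup>2}"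
    unfolding T_def by (auto simp: inner_sum_Basis cong: sum.cong)
  also have "emeasure (Pi\<^sub>M Basis (\<lambda>_. lborel)) ({f. (\<Sum>i\<in>Basis. (max (\<bar>f i\<bar> - c i) 0)\<^sup>2) \<le> \<rho>\<^sup>2}
      \<inter> space (Pi\<^sub>M Basis (\<lambda>_. lborel))) = ennreal (PB Basis c \<rho>)"
    using c rho by (intro box_aux) auto
  finally have "emeasure lborel T = ennreal (PB Basis c \<rho>)" .
  then have "measure lborel T = PB Basis c \<rho>"
    using PB_nonneg[of Basis c \<rho>] c rho by (simp add: measure_def)
  then have "measure lebesgue T = PB Basis c \<rho>"
    using Tb by (simp add: measure_completion)
  then show ?thesis using parallel_box[OF c] rho unfolding T_def by simp
qed


definition EB :: "('a::euclidean_space \<Rightarrow> real) \<Rightarrow> nat \<Rightarrow> real" where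
  "EB c k = (\<Sum>S\<in>{S. S \<subseteq> (Basis::'a set) \<and> card S = k}. \<Prod>b\<in>Basis - S. 2 * c b)"

lemma PB_group:
  fixes c :: "'a::euclidean_space \<Rightarrow> real"
  shows "PB (Basis::'a set) c \<rho> = (\<Sum>k\<le>DIM('a). EB c k * unit_ball_vol k * \<rho> ^ k)"
proof -
  have "PB (Basis::'a set) c \<rho> = (\<Sum>k\<le>DIM('a). \<Sum>S\<in>{S\<in>Pow Basis. card S = k}.
          (\<Prod>i\<in>Basis-S. 2 * c i) * unit_ball_vol (card S) * \<rho> ^ card S)"
    unfolding PB_def
    by (rule sum.group[symmetric]) (auto intro: card_mono)
  also have "\<dots> = (\<Sum>k\<le>DIM('a). \<Sum>S\<in>{S\<in>Pow Basis. card S = k}.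
          (\<Prod>i\<in>Basis-S. 2 * c i) * (unit_ball_vol k * \<rho> ^ k))"
    by (intro sum.cong refl) (auto simp: mult_ac)
  also have "\<dots> = (\<Sum>k\<le>DIM('a). EB c k * unit_ball_vol k * \<rho> ^ k)"
    unfolding EB_def by (simp add: sum_distrib_right sum_distrib_left mult_ac Pow_def)
  finally show ?thesis .
qed

lemma rev_sum_atMost: "(\<Sum>i\<le>n. f (n - i)) = (\<Sum>k\<le>(n::nat). (f k :: real))"
  by (rule sum.reindex_bij_witness[of _ "\<lambda>i. n - i" "\<lambda>i. n - i"]) auto

lemma kappa_eq: "kappa d = unit_ball_vol (real d)"
  by (simp add: kappa_def unit_ball_vol_def)

lemma kappa_pos: "kappa d > 0"
  by (simp add: kappa_eq)

lemma steiner_unique: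
  assumes "\<forall>\<rho>>0. (\<Sum>i\<le>n. \<rho> ^ (n - i) * kappa (n - i) * V i) = (\<Sum>i\<le>n. \<rho> ^ (n - i) * kappa (n - i) * W i)"
  shows "\<forall>i\<le>n. V i = W i"
proof -
  define cf where "cf k = kappa k * (V (n - k) - W (n - k))" for k
  have eq0: "(\<Sum>k\<le>n. cf k * \<rho> ^ k) = 0" if "\<rho> > 0" for \<rho> :: real
  proof -
    have "(\<Sum>k\<le>n. cf k * \<rho> ^ k) = (\<Sum>i\<le>n. cf (n - i) * \<rho> ^ (n - i))"
      by (rule rev_sum_atMost[symmetric])
    also have "\<dots> = (\<Sum>i\<le>n. \<rho> ^ (n - i) * kappa (n - i) * V i) - (\<Sum>i\<le>n. \<rho> ^ (n - i) * kappa (n - i) * W i)"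
      unfolding cf_def sum_subtractf[symmetric] by (intro sum.cong refl) (auto simp: algebra_simps)
    also have "\<dots> = 0" using assms that by simp
    finally show ?thesis .
  qed
  have "{0<..} \<subseteq> {x::real. (\<Sum>k\<le>n. cf k * x ^ k) = 0}" using eq0 by auto
  moreover have "infinite {0::real<..}" by (rule infinite_Ioi)
  ultimately have "infinite {x::real. (\<Sum>k\<le>n. cf k * x ^ k) = 0}" using finite_subset by blast
  then have "\<forall>k\<le>n. cf k = 0" using polyfun_finite_roots[of cf n] by auto
  then show ?thesis
  proof (intro allI impI)
    fix i assume "\<forall>k\<le>n. cf k = 0" "i \<le> n"
    then have "cf (n - i) = 0" by auto
    then show "V i = W i" using \<open>i \<le> n\<close> kappa_pos[of "n - i"] by (simp add: cf_def)
  qed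
qed

lemma iv_box:
  fixes c :: "'a::euclidean_space \<Rightarrow> real"
  assumes c: "\<forall>b\<in>Basis. 0 \<le> c b"
  shows "intrinsic_volume j (boxc c :: 'a set) = (if j \<le> DIM('a) then EB c (DIM('a) - j) else 0)"
proof -
  define V where "V i = (if i \<le> DIM('a) then EB c (DIM('a) - i) else 0)" for i
  define P where "P = (\<lambda>V. (\<forall>i>DIM('a). V i = 0) \<and>
        (\<forall>\<rho>>0. measure lebesgue {x + y | x y. x \<in> (boxc c :: 'a set) \<and> y \<in> cball 0 \<rho>}
               = (\<Sum>i\<le>DIM('a). \<rho> ^ (DIM('a) - i) * kappa (DIM('a) - i) * V i)))"
  have PV: "P V"
    unfolding P_def
  proof (intro conjI allI impI)
    fix i assume "DIM('a) < i" then show "V i = 0" by (simp add: V_def)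
  next
    fix \<rho> :: real assume "\<rho> > 0"
    then have "measure lebesgue {x + y | x y. x \<in> (boxc c :: 'a set) \<and> y \<in> cball 0 \<rho>}
        = (\<Sum>k\<le>DIM('a). EB c k * unit_ball_vol k * \<rho> ^ k)"
      using measure_parallel_box[OF c] PB_group by simp
    also have "\<dots> = (\<Sum>i\<le>DIM('a). EB c (DIM('a) - i) * unit_ball_vol (DIM('a) - i) * \<rho> ^ (DIM('a) - i))"
      by (rule rev_sum_atMost[symmetric, where f = "\<lambda>k. EB c k * unit_ball_vol k * \<rho> ^ k"])
    also have "\<dots> = (\<Sum>i\<le>DIM('a). \<rho> ^ (DIM('a) - i) * kappa (DIM('a) - i) * V i)"
      by (intro sum.cong refl) (auto simp: V_def kappa_eq)
    finally show "measure lebesgue {x + y | x y. x \<in> (boxc c :: 'a set) \<and> y \<in> cball 0 \<rho>}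
        = (\<Sum>i\<le>DIM('a). \<rho> ^ (DIM('a) - i) * kappa (DIM('a) - i) * V i)" .
  qed
  have "(THE V. P V) = V"
  proof (rule the_equality)
    show "P V" by (rule PV)
  next
    fix W assume "P W"
    then have "\<forall>i\<le>DIM('a). W i = V i"
      using PV unfolding P_def by (intro steiner_unique) auto
    moreover have "\<forall>i>DIM('a). W i = V i" using \<open>P W\<close> PV unfolding P_def by auto
    ultimately show "W = V" by (metis ext not_le)
  qed
  then show ?thesis unfolding intrinsic_volume_def P_def[symmetric] by (simp add: V_def)
qed


definition cs :: "'a::euclidean_space \<Rightarrow> real \<Rightarrow> 'a \<Rightarrow> real" where
  "cs b0 s b = (if b = b0 then s else 1)"

lemma EB_special:
  fixes b0 :: "'a::euclidean_space"
  assumes b0: "b0 \<in> Basis" and k1: "1 \<le> k" and kn: "k < DIM('a)"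
  shows "\<exists>N1 N2. N1 > 0 \<and> N2 > 0 \<and> (\<forall>s. EB (cs b0 s) k = 2 ^ (DIM('a) - k) * (N1 + s * N2))"
proof -
  define A1 where "A1 = {S. S \<subseteq> (Basis::'a set) \<and> card S = k \<and> b0 \<in> S}"
  define A2 where "A2 = {S. S \<subseteq> (Basis::'a set) \<and> card S = k \<and> b0 \<notin> S}"
  have fin: "finite {S. S \<subseteq> (Basis::'a set) \<and> card S = k}"
    by (rule finite_subset[of _ "Pow Basis"]) auto
  have fin1: "finite A1" unfolding A1_def by (rule finite_subset[OF _ fin]) auto
  have fin2: "finite A2" unfolding A2_def by (rule finite_subset[OF _ fin]) auto
  have cardB: "card (Basis - {b0}) = DIM('a) - 1" using b0 by simp
  have "k - 1 \<le> card (Basis - {b0})" using cardB kn by simp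
  then obtain T1 where T1: "T1 \<subseteq> Basis - {b0}" "card T1 = k - 1" "finite T1"
    using obtain_subset_with_card_n by blast
  have "insert b0 T1 \<in> A1" unfolding A1_def using T1 b0 k1 by (auto simp: card_insert_if)
  then have N1: "card A1 > 0" using fin1 by (auto simp: card_gt_0_iff)
  have "k \<le> card (Basis - {b0})" using cardB kn by simp
  then obtain T2 where T2: "T2 \<subseteq> Basis - {b0}" "card T2 = k" "finite T2"
    using obtain_subset_with_card_n by blast
  have "T2 \<in> A2" unfolding A2_def using T2 by auto
  then have N2: "card A2 > 0" using fin2 by (auto simp: card_gt_0_iff)
  have main: "EB (cs b0 s) k = 2 ^ (DIM('a) - k) * (real (card A1) + s * real (card A2))" for s
  proof -
    have split: "{S. S \<subseteq> (Basis::'a set) \<and> card S = k} = A1 \<union> A2" "A1 \<inter> A2 = {}"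
      unfolding A1_def A2_def by auto
    have cardS: "card (Basis - S) = DIM('a) - k" if "S \<subseteq> Basis" "card S = k" for S :: "'a set"
      using that by (simp add: card_Diff_subset finite_subset)
    have s1: "(\<Prod>b\<in>Basis - S. 2 * cs b0 s b) = 2 ^ (DIM('a) - k)" if "S \<in> A1" for S
    proof -
      have "(\<Prod>b\<in>Basis - S. 2 * cs b0 s b) = (\<Prod>b\<in>Basis - S. 2)"
        using that unfolding A1_def cs_def by (intro prod.cong) auto
      then show ?thesis using cardS that unfolding A1_def by simp
    qed
    have s2: "(\<Prod>b\<in>Basis - S. 2 * cs b0 s b) = s * 2 ^ (DIM('a) - k)" if "S \<in> A2" for S
    proof -
      have S: "S \<subseteq> Basis" "card S = k" "b0 \<notin> S" using that unfolding A2_def by auto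
      then have b0S: "b0 \<in> Basis - S" using b0 by auto
      have "(\<Prod>b\<in>Basis - S. 2 * cs b0 s b) = (2 * cs b0 s b0) * (\<Prod>b\<in>Basis - S - {b0}. 2 * cs b0 s b)"
        by (rule prod.remove[OF _ b0S]) simp
      also have "(\<Prod>b\<in>Basis - S - {b0}. 2 * cs b0 s b) = (\<Prod>b\<in>Basis - S - {b0}. 2)"
        unfolding cs_def by (intro prod.cong) auto
      also have "\<dots> = 2 ^ (DIM('a) - k - 1)"
        using cardS[OF S(1,2)] b0S by (simp add: card_Diff_singleton)
      finally have "(\<Prod>b\<in>Basis - S. 2 * cs b0 s b) = 2 * s * 2 ^ (DIM('a) - k - 1)"
        by (simp add: cs_def)
      also have "\<dots> = s * 2 ^ (DIM('a) - k)"
        using kn by (cases "DIM('a) - k") auto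
      finally show ?thesis .
    qed
    have "EB (cs b0 s) k = (\<Sum>S\<in>A1. \<Prod>b\<in>Basis - S. 2 * cs b0 s b) + (\<Sum>S\<in>A2. \<Prod>b\<in>Basis - S. 2 * cs b0 s b)"
      unfolding EB_def split(1) by (rule sum.union_disjoint[OF fin1 fin2 split(2)])
    also have "\<dots> = (\<Sum>S\<in>A1. 2 ^ (DIM('a) - k)) + (\<Sum>S\<in>A2. s * 2 ^ (DIM('a) - k))"
      using s1 s2 by simp
    also have "\<dots> = 2 ^ (DIM('a) - k) * (real (card A1) + s * real (card A2))"
      by (simp add: algebra_simps)
    finally show ?thesis .
  qed
  show ?thesis
    by (rule exI[of _ "real (card A1)"], rule exI[of _ "real (card A2)"]) (use N1 N2 main in auto)
qed

lemma boxc_cbox: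
  fixes c :: "'a::euclidean_space \<Rightarrow> real"
  shows "boxc c = cbox (- (\<Sum>b\<in>Basis. c b *\<^sub>R b)) (\<Sum>b\<in>Basis. c b *\<^sub>R b)"
proof -
  have e: "\<bar>x \<bullet> b\<bar> \<le> c b \<longleftrightarrow> - c b \<le> x \<bullet> b \<and> x \<bullet> b \<le> c b" for x :: 'a and b
    by (cases "x \<bullet> b \<ge> 0") auto
  show ?thesis unfolding boxc_def by (auto simp: mem_box inner_sum_Basis e)
qed

lemma boxc_convex_body:
  fixes c :: "'a::euclidean_space \<Rightarrow> real"
  assumes "\<forall>b\<in>Basis. 0 < c b"
  shows "convex_body (boxc c)"
proof -
  have "0 \<in> box (- (\<Sum>b\<in>Basis. c b *\<^sub>R b)) (\<Sum>b\<in>Basis. c b *\<^sub>R b :: 'a)"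
    using assms by (auto simp: mem_box inner_sum_Basis)
  then show ?thesis
    unfolding convex_body_def boxc_cbox
    by (auto simp: compact_cbox convex_box interior_cbox)
qed

lemma boxc_symmetric: "origin_symmetric (boxc c)"
  unfolding origin_symmetric_def
proof (intro equalityI subsetI)
  fix x assume "x \<in> uminus ` boxc c"
  then show "x \<in> boxc c" by (auto simp: boxc_def)
next
  fix x assume x: "x \<in> boxc c"
  have "- x \<in> boxc c" using x by (auto simp: boxc_def)
  then show "x \<in> uminus ` boxc c" by (rule image_eqI[rotated]) simp
qed

lemma mult_sgn_self: "(x::real) * sgn x = \<bar>x\<bar>"
  by (cases rule: linorder_cases[of x 0]) auto

lemma support_boxc:
  fixes c :: "'a::euclidean_space \<Rightarrow> real"
  assumes c: "\<forall>b\<in>Basis. 0 \<le> c b"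
  shows "support_fun (boxc c) u = (\<Sum>b\<in>Basis. c b * \<bar>u \<bullet> b\<bar>)"
proof -
  define y where "y = (\<Sum>b\<in>Basis. (c b * sgn (u \<bullet> b)) *\<^sub>R b)"
  have yb: "y \<bullet> b = c b * sgn (u \<bullet> b)" if "b \<in> Basis" for b
    unfolding y_def using that by (rule inner_sum_Basis)
  have ybox: "y \<in> boxc c" unfolding boxc_def using yb c
    by (auto simp: abs_mult abs_sgn_eq)
  have uy: "u \<bullet> y = (\<Sum>b\<in>Basis. c b * \<bar>u \<bullet> b\<bar>)"
    by (subst euclidean_inner) (auto simp: yb intro!: sum.cong simp: mult_sgn_self mult.left_commute[of _ "c _"])
  have le: "u \<bullet> z \<le> (\<Sum>b\<in>Basis. c b * \<bar>u \<bullet> b\<bar>)" if "z \<in> boxc c" for z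
  proof -
    have "u \<bullet> z = (\<Sum>b\<in>Basis. (u \<bullet> b) * (z \<bullet> b))" by (rule euclidean_inner)
    also have "\<dots> \<le> (\<Sum>b\<in>Basis. c b * \<bar>u \<bullet> b\<bar>)"
    proof (intro sum_mono)
      fix b :: 'a assume b: "b \<in> Basis"
      have "(u \<bullet> b) * (z \<bullet> b) \<le> \<bar>u \<bullet> b\<bar> * \<bar>z \<bullet> b\<bar>" by (metis abs_ge_self abs_mult)
      also have "\<dots> \<le> \<bar>u \<bullet> b\<bar> * c b" using that b unfolding boxc_def by (intro mult_left_mono) auto
      finally show "(u \<bullet> b) * (z \<bullet> b) \<le> c b * \<bar>u \<bullet> b\<bar>" by (simp add: mult_ac)
    qed
    finally show ?thesis .
  qed
  show ?thesis unfolding support_fun_def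
  proof (rule cSup_eq_maximum)
    show "(\<Sum>b\<in>Basis. c b * \<bar>u \<bullet> b\<bar>) \<in> (\<bullet>) u ` boxc c"
      using ybox uy by (metis image_eqI)
  qed (use le in auto)
qed

definition Fm :: "real \<Rightarrow> real \<Rightarrow> real \<Rightarrow> real \<Rightarrow> real" where
  "Fm p lam x y = (if p = 0 then x powr (1 - lam) * y powr lam
     else ((1 - lam) * x powr p + lam * y powr p) powr (1 / p))"

lemma Fm_diag:
  assumes "0 \<le> x" "0 < lam" "lam < 1"
  shows "Fm p lam x x = x"
proof (cases "p = 0")
  case True
  then show ?thesis using assms
    by (cases "x = 0") (auto simp: Fm_def powr_add[symmetric])
next
  case False
  have "(1 - lam) * x powr p + lam * x powr p = x powr p" by (simp add: algebra_simps)
  then show ?thesis using False assms by (simp add: Fm_def powr_powr)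
qed

lemma Fm_hom:
  assumes "0 \<le> a" "0 \<le> x" "0 \<le> y" "0 < lam" "lam < 1" "0 \<le> p"
  shows "Fm p lam (a * x) (a * y) = a * Fm p lam x y"
proof (cases "p = 0")
  case True
  then show ?thesis using assms
    by (cases "a = 0") (auto simp: Fm_def powr_mult powr_add[symmetric] mult_ac)
next
  case False
  then have p: "p > 0" using assms by simp
  have "(1 - lam) * (a * x) powr p + lam * (a * y) powr p = a powr p * ((1 - lam) * x powr p + lam * y powr p)"
    using assms by (simp add: powr_mult algebra_simps)
  moreover have "(a powr p) powr (1 / p) = a" using assms p by (simp add: powr_powr)
  moreover have "0 \<le> (1 - lam) * x powr p + lam * y powr p" using assms by simp
  ultimately show ?thesis using False assms by (simp add: Fm_def powr_mult)
qed

lemma Fm_pos: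
  assumes "0 < x" "0 < y" "0 < lam" "lam < 1"
  shows "0 < Fm p lam x y"
proof -
  have "0 < (1 - lam) * x powr p + lam * y powr p" using assms by (intro add_pos_pos) auto
  then show ?thesis using assms by (auto simp: Fm_def)
qed

lemma conc_powr:
  fixes p r a1 a2 :: real
  assumes p: "0 < p" "p < 1" and r: "0 \<le> r" "r \<le> 1" and a: "0 < a1" "0 < a2"
  shows "r * a1 powr p + (1 - r) * a2 powr p \<le> (r * a1 + (1 - r) * a2) powr p"
proof -
  define m where "m = r * a1 + (1 - r) * a2"
  have m: "m > 0" unfolding m_def using r a
    by (cases "r = 0") (auto intro: add_pos_nonneg mult_pos_pos)
  have Y: "(a / m) powr p \<le> p * (a / m) + (1 - p)" if "a > 0" for a
    using Youngs_inequality_0[of p "1 - p" "a / m" 1] p that m by simp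
  have "r * (a1 / m) powr p + (1 - r) * (a2 / m) powr p \<le> r * (p * (a1 / m) + (1 - p)) + (1 - r) * (p * (a2 / m) + (1 - p))"
    using Y[OF a(1)] Y[OF a(2)] r by (intro add_mono mult_left_mono) auto
  also have "\<dots> = p * ((r * a1 + (1 - r) * a2) / m) + (1 - p)"
    using m by (simp add: field_simps)
  also have "\<dots> = p * (m / m) + (1 - p)" unfolding m_def by simp
  also have "\<dots> = 1" using m by simp
  finally have "r * (a1 / m) powr p + (1 - r) * (a2 / m) powr p \<le> 1" .
  then have "(r * a1 powr p + (1 - r) * a2 powr p) / m powr p \<le> 1"
    using a m by (simp add: powr_divide add_divide_distrib)
  then show ?thesis using m unfolding m_def[symmetric] by (simp add: divide_le_eq)
qed

lemma Fm_super:
  assumes x: "0 < x1" "0 < x2" and y: "0 < y1" "0 < y2"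
    and lam: "0 < lam" "lam < 1" and p: "0 \<le> p" "p < 1"
  shows "Fm p lam x1 y1 + Fm p lam x2 y2 \<le> Fm p lam (x1 + x2) (y1 + y2)"
proof (cases "p = 0")
  case True
  define X where "X = x1 + x2"
  define Y where "Y = y1 + y2"
  have XY: "X > 0" "Y > 0" using x y by (auto simp: X_def Y_def)
  have Yg: "(xi / X) powr (1 - lam) * (yi / Y) powr lam \<le> (1 - lam) * (xi / X) + lam * (yi / Y)"
    if "xi > 0" "yi > 0" for xi yi
    using Youngs_inequality_0[of "1 - lam" lam "xi / X" "yi / Y"] lam that XY by simp
  have eq: "(xi / X) powr (1 - lam) * (yi / Y) powr lam = xi powr (1 - lam) * yi powr lam / (X powr (1 - lam) * Y powr lam)"
    if "xi > 0" "yi > 0" for xi yi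
    using that XY by (simp add: powr_divide)
  have "(x1 powr (1 - lam) * y1 powr lam + x2 powr (1 - lam) * y2 powr lam) / (X powr (1 - lam) * Y powr lam)
      \<le> (1 - lam) * (x1 / X) + lam * (y1 / Y) + ((1 - lam) * (x2 / X) + lam * (y2 / Y))"
    using Yg[OF x(1) y(1)] Yg[OF x(2) y(2)] eq[OF x(1) y(1)] eq[OF x(2) y(2)]
    by (simp add: add_divide_distrib)
  also have "\<dots> = (1 - lam) * ((x1 + x2) / X) + lam * ((y1 + y2) / Y)"
    by (simp add: algebra_simps add_divide_distrib)
  also have "\<dots> = (1 - lam) * (X / X) + lam * (Y / Y)"
    unfolding X_def Y_def by simp
  also have "\<dots> = 1" using XY by simp
  finally show ?thesis using True XY by (simp add: Fm_def X_def Y_def divide_le_eq)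
next
  case False
  then have p0: "0 < p" using p by simp
  define G where "G x y = (1 - lam) * x powr p + lam * y powr p" for x y
  have Gpos: "G x y > 0" if "x > 0" "y > 0" for x y
    unfolding G_def using that lam by (intro add_pos_pos) auto
  have Fm_G: "Fm p lam x y = G x y powr (1 / p)" for x y using False by (simp add: Fm_def G_def)
  define F1 where "F1 = Fm p lam x1 y1"
  define F2 where "F2 = Fm p lam x2 y2"
  have F1p: "F1 > 0" and F2p: "F2 > 0" unfolding F1_def F2_def using Fm_pos x y lam by auto
  have F1G: "F1 powr p = G x1 y1" unfolding F1_def Fm_G using Gpos[OF x(1) y(1)] p0
    by (simp add: powr_powr)
  have F2G: "F2 powr p = G x2 y2" unfolding F2_def Fm_G using Gpos[OF x(2) y(2)] p0
    by (simp add: powr_powr)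
  define T where "T = F1 + F2"
  define r where "r = F1 / T"
  have T: "T > 0" using F1p F2p by (simp add: T_def)
  have r: "0 \<le> r" "r \<le> 1" "1 - r = F2 / T" using F1p F2p T by (auto simp: r_def T_def field_simps)
  have cx: "r * (x1 / F1) + (1 - r) * (x2 / F2) = (x1 + x2) / T"
  proof -
    have "r * (x1 / F1) = x1 / T" using F1p by (simp add: r_def)
    moreover have "(1 - r) * (x2 / F2) = x2 / T" using F2p r(3) by simp
    ultimately show ?thesis by (simp add: add_divide_distrib)
  qed
  have cy: "r * (y1 / F1) + (1 - r) * (y2 / F2) = (y1 + y2) / T"
  proof -
    have "r * (y1 / F1) = y1 / T" using F1p by (simp add: r_def)
    moreover have "(1 - r) * (y2 / F2) = y2 / T" using F2p r(3) by simp
    ultimately show ?thesis by (simp add: add_divide_distrib)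
  qed
  have Cx: "r * (x1 / F1) powr p + (1 - r) * (x2 / F2) powr p \<le> ((x1 + x2) / T) powr p"
    using conc_powr[OF p0 p(2) r(1) r(2), of "x1 / F1" "x2 / F2"] x F1p F2p cx by simp
  have Cy: "r * (y1 / F1) powr p + (1 - r) * (y2 / F2) powr p \<le> ((y1 + y2) / T) powr p"
    using conc_powr[OF p0 p(2) r(1) r(2), of "y1 / F1" "y2 / F2"] y F1p F2p cy by simp
  have G1: "G (x1 / F1) (y1 / F1) = 1"
    using F1G F1p x y Gpos[OF x(1) y(1)] by (simp add: G_def powr_divide add_divide_distrib[symmetric])
  have G2: "G (x2 / F2) (y2 / F2) = 1"
    using F2G F2p x y Gpos[OF x(2) y(2)] by (simp add: G_def powr_divide add_divide_distrib[symmetric])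
  have "1 = r * G (x1 / F1) (y1 / F1) + (1 - r) * G (x2 / F2) (y2 / F2)"
    using G1 G2 by simp
  also have "\<dots> = (1 - lam) * (r * (x1 / F1) powr p + (1 - r) * (x2 / F2) powr p)
      + lam * (r * (y1 / F1) powr p + (1 - r) * (y2 / F2) powr p)"
    by (simp add: G_def algebra_simps)
  also have "\<dots> \<le> (1 - lam) * ((x1 + x2) / T) powr p + lam * ((y1 + y2) / T) powr p"
    using Cx Cy lam by (intro add_mono mult_left_mono) auto
  also have "\<dots> = G (x1 + x2) (y1 + y2) / T powr p"
  proof -
    have "((x1 + x2) / T) powr p = (x1 + x2) powr p / T powr p"
      using x T by (simp add: powr_divide)
    moreover have "((y1 + y2) / T) powr p = (y1 + y2) powr p / T powr p"
      using y T by (simp add: powr_divide)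
    ultimately show ?thesis by (simp add: G_def add_divide_distrib)
  qed
  finally have "T powr p \<le> G (x1 + x2) (y1 + y2)" using T by (simp add: le_divide_eq)
  then have "(T powr p) powr (1 / p) \<le> G (x1 + x2) (y1 + y2) powr (1 / p)"
    using p0 T by (intro powr_mono2) auto
  then show ?thesis using T p0 unfolding Fm_G[symmetric] F1_def[symmetric] F2_def[symmetric] T_def[symmetric]
    by (simp add: powr_powr)
qed


lemma sum_cs:
  fixes b0 :: "'a::euclidean_space"
  assumes b0: "b0 \<in> Basis"
  shows "(\<Sum>b\<in>Basis. cs b0 s b * \<bar>u \<bullet> b\<bar>) = s * \<bar>u \<bullet> b0\<bar> + (\<Sum>b\<in>Basis - {b0}. \<bar>u \<bullet> b\<bar>)"
proof -
  have "(\<Sum>b\<in>Basis. cs b0 s b * \<bar>u \<bullet> b\<bar>) = cs b0 s b0 * \<bar>u \<bullet> b0\<bar> + (\<Sum>b\<in>Basis - {b0}. cs b0 s b * \<bar>u \<bullet> b\<bar>)"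
    by (rule sum.remove[OF _ b0]) simp
  also have "(\<Sum>b\<in>Basis - {b0}. cs b0 s b * \<bar>u \<bullet> b\<bar>) = (\<Sum>b\<in>Basis - {b0}. \<bar>u \<bullet> b\<bar>)"
    by (intro sum.cong) (auto simp: cs_def)
  finally show ?thesis by (simp add: cs_def)
qed

lemma sum_cs_Basis:
  fixes b0 :: "'a::euclidean_space"
  assumes b: "b \<in> Basis"
  shows "(\<Sum>b'\<in>Basis. cs b0 s b' * \<bar>b \<bullet> b'\<bar>) = cs b0 s b"
proof -
  have "(\<Sum>b'\<in>Basis. cs b0 s b' * \<bar>b \<bullet> b'\<bar>) = (\<Sum>b'\<in>Basis. if b' = b then cs b0 s b' else 0)"
    using b by (intro sum.cong) (auto simp: inner_Basis)
  also have "\<dots> = cs b0 s b" using b by (simp add: sum.delta')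
  finally show ?thesis .
qed

lemma boxc_inner_le:
  fixes c :: "'a::euclidean_space \<Rightarrow> real"
  assumes "z \<in> boxc c"
  shows "u \<bullet> z \<le> (\<Sum>b\<in>Basis. c b * \<bar>u \<bullet> b\<bar>)"
proof -
  have "u \<bullet> z = (\<Sum>b\<in>Basis. (u \<bullet> b) * (z \<bullet> b))" by (rule euclidean_inner)
  also have "\<dots> \<le> (\<Sum>b\<in>Basis. c b * \<bar>u \<bullet> b\<bar>)"
  proof (intro sum_mono)
    fix b :: 'a assume b: "b \<in> Basis"
    have "(u \<bullet> b) * (z \<bullet> b) \<le> \<bar>u \<bullet> b\<bar> * \<bar>z \<bullet> b\<bar>" by (metis abs_ge_self abs_mult)
    also have "\<dots> \<le> \<bar>u \<bullet> b\<bar> * c b" using assms b unfolding boxc_def by (intro mult_left_mono) auto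
    finally show "(u \<bullet> b) * (z \<bullet> b) \<le> c b * \<bar>u \<bullet> b\<bar>" by (simp add: mult_ac)
  qed
  finally show ?thesis .
qed

lemma wulff_box:
  fixes b0 :: "'a::euclidean_space"
  assumes b0: "b0 \<in> Basis" and s: "0 < s" and t: "0 < t"
    and lam: "0 < lam" "lam < 1" and p: "0 \<le> p" "p < 1"
  shows "wulff (\<lambda>u. Fm p lam (support_fun (boxc (cs b0 s)) u) (support_fun (boxc (cs b0 t)) u))
       = boxc (cs b0 (Fm p lam s t))"
proof -
  have cpos: "\<forall>b\<in>Basis. 0 \<le> cs b0 r b" if "0 \<le> r" for r using that by (auto simp: cs_def)
  have hs: "support_fun (boxc (cs b0 r)) u = (\<Sum>b\<in>Basis. cs b0 r b * \<bar>u \<bullet> b\<bar>)" if "0 \<le> r" for r u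
    using support_boxc[OF cpos[OF that]] .
  have Fst: "Fm p lam s t > 0" using Fm_pos s t lam by auto
  have diag: "Fm p lam (cs b0 s b) (cs b0 t b) = cs b0 (Fm p lam s t) b" for b
    using Fm_diag[of 1 lam p] lam by (auto simp: cs_def)
  show ?thesis
  proof (intro equalityI subsetI)
    fix x :: 'a assume x: "x \<in> wulff (\<lambda>u. Fm p lam (support_fun (boxc (cs b0 s)) u) (support_fun (boxc (cs b0 t)) u))"
    show "x \<in> boxc (cs b0 (Fm p lam s t))"
      unfolding boxc_def
    proof (intro CollectI ballI)
      fix b :: 'a assume b: "b \<in> Basis"
      have sp: "b \<in> sphere 0 1" "- b \<in> sphere 0 1" using b by auto
      have h1: "support_fun (boxc (cs b0 r)) b = cs b0 r b" if "0 \<le> r" for r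
        using hs[OF that] sum_cs_Basis[OF b] by simp
      have h2: "support_fun (boxc (cs b0 r)) (- b) = cs b0 r b" if "0 \<le> r" for r
        using hs[OF that] sum_cs_Basis[OF b] by simp
      have "x \<bullet> b \<le> Fm p lam (support_fun (boxc (cs b0 s)) b) (support_fun (boxc (cs b0 t)) b)"
        using x sp(1) unfolding wulff_def by blast
      then have "x \<bullet> b \<le> cs b0 (Fm p lam s t) b"
        using h1[of s] h1[of t] s t diag by simp
      moreover have "x \<bullet> (- b) \<le> Fm p lam (support_fun (boxc (cs b0 s)) (- b)) (support_fun (boxc (cs b0 t)) (- b))"
        using x sp(2) unfolding wulff_def by blast
      then have "x \<bullet> (- b) \<le> cs b0 (Fm p lam s t) b"
        using h2[of s] h2[of t] s t diag by simp
      ultimately show "\<bar>x \<bullet> b\<bar> \<le> cs b0 (Fm p lam s t) b" by auto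
    qed
  next
    fix x :: 'a assume x: "x \<in> boxc (cs b0 (Fm p lam s t))"
    show "x \<in> wulff (\<lambda>u. Fm p lam (support_fun (boxc (cs b0 s)) u) (support_fun (boxc (cs b0 t)) u))"
      unfolding wulff_def
    proof (intro CollectI ballI)
      fix u :: 'a assume u: "u \<in> sphere 0 1"
      define H where "H = (\<Sum>b\<in>Basis - {b0}. \<bar>u \<bullet> b\<bar>)"
      define w where "w = \<bar>u \<bullet> b0\<bar>"
      have H0: "H \<ge> 0" "w \<ge> 0" unfolding H_def w_def by (auto intro: sum_nonneg)
      have "x \<bullet> u \<le> (\<Sum>b\<in>Basis. cs b0 (Fm p lam s t) b * \<bar>u \<bullet> b\<bar>)"
        using boxc_inner_le[OF x, of u] by (simp add: inner_commute)
      also have "\<dots> = Fm p lam s t * w + H"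
        using sum_cs[OF b0] by (simp add: H_def w_def)
      also have "\<dots> \<le> Fm p lam (s * w + H) (t * w + H)"
      proof (cases "H = 0 \<or> w = 0")
        case True
        then show ?thesis
        proof
          assume "H = 0"
          then show ?thesis using Fm_hom[of w s t lam p] H0 s t lam p by (simp add: mult_ac)
        next
          assume "w = 0"
          then show ?thesis using Fm_diag[of H lam p] H0 lam by simp
        qed
      next
        case False
        then have Hp: "H > 0" "w > 0" using H0 by auto
        have "Fm p lam (w * s) (w * t) + Fm p lam H H \<le> Fm p lam (w * s + H) (w * t + H)"
          using Fm_super[of "w * s" H "w * t" H lam p] Hp s t lam p by simp
        then show ?thesis using Fm_hom[of w s t lam p] Fm_diag[of H lam p] Hp s t lam p
          by (simp add: mult_ac)
      qed
      also have "\<dots> = Fm p lam (support_fun (boxc (cs b0 s)) u) (support_fun (boxc (cs b0 t)) u)"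
        using hs[of s u] hs[of t u] s t sum_cs[OF b0] by (simp add: H_def w_def)
      finally show "x \<bullet> u \<le> Fm p lam (support_fun (boxc (cs b0 s)) u) (support_fun (boxc (cs b0 t)) u)" .
    qed
  qed
qed

lemma Lp_comb_Fm: "Lp_comb p lam K L = wulff (\<lambda>u. Fm p lam (support_fun K u) (support_fun L u))"
  by (simp add: Lp_comb_def Fm_def)

lemma key_ineq:
  fixes c0 lam x :: real
  assumes lam: "0 < lam" "lam < 1" and c0: "0 \<le> c0" "c0 < 1 - lam"
  defines "x \<equiv> (1 - c0 / (1 - lam)) / 2"
  shows "0 < x" "1 + c0 * x < (1 + x) powr (1 - lam)"
proof -
  have q: "c0 / (1 - lam) < 1" using c0 lam by (simp add: divide_less_eq)
  have q0: "0 \<le> c0 / (1 - lam)" using c0 lam by simp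
  show x0: "0 < x" using q unfolding x_def by simp
  have x1: "x \<le> 1" using q0 unfolding x_def by simp
  have "1 + c0 * x < 1 + (1 - lam) * (x - x\<^sup>2)"
  proof -
    have "c0 = (1 - lam) * (c0 / (1 - lam))" using lam by simp
    also have "\<dots> < (1 - lam) * (1 - x)"
    proof (intro mult_strict_left_mono)
      have aux: "q < 1 - (1 - q) / 2" if "q < 1" for q :: real using that by (simp add: field_simps)
      show "c0 / (1 - lam) < 1 - x" unfolding x_def by (rule aux[OF q])
    qed (use lam in auto)
    finally have "c0 * x < (1 - lam) * (1 - x) * x" using x0 by (intro mult_strict_right_mono) auto
    then show ?thesis by (simp add: power2_eq_square algebra_simps)
  qed
  also have "\<dots> \<le> 1 + (1 - lam) * ln (1 + x)"
    using ln_one_plus_pos_lower_bound[of x] x0 x1 lam by (intro add_left_mono mult_left_mono) auto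
  also have "\<dots> \<le> exp ((1 - lam) * ln (1 + x))" by (rule exp_ge_add_one_self)
  also have "\<dots> = (1 + x) powr (1 - lam)" using x0 by (simp add: powr_def mult_ac)
  finally show "1 + c0 * x < (1 + x) powr (1 - lam)" .
qed

lemma oneD:
  fixes \<alpha> \<beta> p lam :: real
  assumes a: "0 < \<alpha>" "0 < \<beta>" and lam: "0 < lam" "lam < 1" and p: "0 \<le> p" "p < 1"
  shows "\<exists>s>0. \<exists>t>0. \<alpha> + \<beta> * Fm p lam s t < (\<alpha> + \<beta> * s) powr (1 - lam) * (\<alpha> + \<beta> * t) powr lam"
proof -
  define c0 where "c0 = (if p = 0 then 0 else (1 - lam) powr (1 / p))"
  have c0: "0 \<le> c0" "c0 < 1 - lam"
  proof -
    show "0 \<le> c0" by (simp add: c0_def)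
    show "c0 < 1 - lam"
    proof (cases "p = 0")
      case False
      then have "1 < 1 / p" using p by (simp add: field_simps)
      then have "(1 - lam) powr (1 / p) < (1 - lam) powr 1"
        using lam by (intro powr_less_mono') auto
      then show ?thesis using False lam by (simp add: c0_def)
    qed (use lam in \<open>simp add: c0_def\<close>)
  qed
  define x where "x = (1 - c0 / (1 - lam)) / 2"
  have x: "0 < x" "1 + c0 * x < (1 + x) powr (1 - lam)"
    using key_ineq[OF lam c0] unfolding x_def by auto
  define s where "s = \<alpha> * x / \<beta>"
  have s: "0 < s" using a x by (simp add: s_def)
  have as: "\<alpha> + \<beta> * s = \<alpha> * (1 + x)" using a by (simp add: s_def algebra_simps)
  define R0 where "R0 = (\<alpha> + \<beta> * s) powr (1 - lam) * \<alpha> powr lam"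
  have R0: "R0 = \<alpha> * (1 + x) powr (1 - lam)"
    unfolding R0_def as using a x by (simp add: powr_mult powr_add[symmetric] mult_ac)
  have A0: "\<alpha> + \<beta> * (c0 * s) < R0"
  proof -
    have "\<alpha> + \<beta> * (c0 * s) = \<alpha> * (1 + c0 * x)" using a by (simp add: s_def algebra_simps)
    also have "\<dots> < \<alpha> * (1 + x) powr (1 - lam)" using a x by simp
    finally show ?thesis using R0 by simp
  qed
  have limF: "((\<lambda>t. Fm p lam s t) \<longlongrightarrow> c0 * s) (at_right 0)"
  proof (cases "p = 0")
    case True
    have "((\<lambda>t. t powr lam) \<longlongrightarrow> 0) (at_right (0::real))"
      by (rule tendsto_zero_powrI[of "\<lambda>t. t" _ "\<lambda>_. lam" lam])
         (use lam in \<open>auto intro: tendsto_ident_at eventually_at_right_less[THEN eventually_mono]\<close>)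
    then have "((\<lambda>t. s powr (1 - lam) * t powr lam) \<longlongrightarrow> s powr (1 - lam) * 0) (at_right (0::real))"
      by (intro tendsto_mult tendsto_const)
    then show ?thesis using True by (simp add: Fm_def c0_def)
  next
    case False
    then have p0: "0 < p" using p by simp
    have "((\<lambda>t. t powr p) \<longlongrightarrow> 0) (at_right (0::real))"
      by (rule tendsto_zero_powrI[of "\<lambda>t. t" _ "\<lambda>_. p" p])
         (use p0 in \<open>auto intro: tendsto_ident_at eventually_at_right_less[THEN eventually_mono]\<close>)
    then have "((\<lambda>t. (1 - lam) * s powr p + lam * t powr p) \<longlongrightarrow> (1 - lam) * s powr p + lam * 0) (at_right (0::real))"
      by (intro tendsto_add tendsto_mult tendsto_const)
    then have "((\<lambda>t. ((1 - lam) * s powr p + lam * t powr p) powr (1 / p)) \<longlongrightarrow> ((1 - lam) * s powr p) powr (1 / p)) (at_right (0::real))"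
      using s lam by (intro tendsto_powr) auto
    moreover have "((1 - lam) * s powr p) powr (1 / p) = c0 * s"
      using False s lam p0 by (simp add: c0_def powr_mult powr_powr)
    ultimately show ?thesis using False by (simp add: Fm_def)
  qed
  have limL: "((\<lambda>t. \<alpha> + \<beta> * Fm p lam s t) \<longlongrightarrow> \<alpha> + \<beta> * (c0 * s)) (at_right 0)"
    by (intro tendsto_add tendsto_mult tendsto_const limF)
  have limR: "((\<lambda>t. (\<alpha> + \<beta> * s) powr (1 - lam) * (\<alpha> + \<beta> * t) powr lam) \<longlongrightarrow> R0) (at_right 0)"
  proof -
    have "((\<lambda>t. \<alpha> + \<beta> * t) \<longlongrightarrow> \<alpha> + \<beta> * 0) (at_right (0::real))"
      by (intro tendsto_add tendsto_mult tendsto_const tendsto_ident_at)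
    then have "((\<lambda>t. (\<alpha> + \<beta> * t) powr lam) \<longlongrightarrow> \<alpha> powr lam) (at_right (0::real))"
      using a by (intro tendsto_powr) auto
    then show ?thesis unfolding R0_def by (intro tendsto_mult tendsto_const)
  qed
  have "((\<lambda>t. (\<alpha> + \<beta> * s) powr (1 - lam) * (\<alpha> + \<beta> * t) powr lam - (\<alpha> + \<beta> * Fm p lam s t))
      \<longlongrightarrow> R0 - (\<alpha> + \<beta> * (c0 * s))) (at_right 0)"
    by (intro tendsto_diff limR limL)
  then have "eventually (\<lambda>t. 0 < (\<alpha> + \<beta> * s) powr (1 - lam) * (\<alpha> + \<beta> * t) powr lam - (\<alpha> + \<beta> * Fm p lam s t)) (at_right 0)"
    using A0 by (intro order_tendstoD(1)) auto
  then have "eventually (\<lambda>t. 0 < t \<and> 0 < (\<alpha> + \<beta> * s) powr (1 - lam) * (\<alpha> + \<beta> * t) powr lam - (\<alpha> + \<beta> * Fm p lam s t)) (at_right 0)"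
    by (intro eventually_conj eventually_at_right_less)
  then obtain t where "0 < t" "0 < (\<alpha> + \<beta> * s) powr (1 - lam) * (\<alpha> + \<beta> * t) powr lam - (\<alpha> + \<beta> * Fm p lam s t)"
    using eventually_happens'[OF trivial_limit_at_right_real] by blast
  then show ?thesis using s by auto
qed

lemma gm_pm:
  fixes X Y p lam :: real and j :: nat
  assumes XY: "0 < X" "0 < Y" and lam: "0 < lam" "lam < 1" and p: "0 < p" and j: "0 < j"
  shows "X powr (1 - lam) * Y powr lam \<le> ((1 - lam) * X powr (p / j) + lam * Y powr (p / j)) powr (j / p)"
proof -
  have "(X powr (p / j)) powr (1 - lam) * (Y powr (p / j)) powr lam \<le> (1 - lam) * X powr (p / j) + lam * Y powr (p / j)"
    using Youngs_inequality_0[of "1 - lam" lam "X powr (p / j)" "Y powr (p / j)"] XY lam by simp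
  moreover have "(X powr (p / j)) powr (1 - lam) * (Y powr (p / j)) powr lam = (X powr (1 - lam) * Y powr lam) powr (p / j)"
    using XY by (simp add: powr_powr powr_mult mult_ac)
  ultimately have "((X powr (1 - lam) * Y powr lam) powr (p / j)) powr (j / p)
      \<le> ((1 - lam) * X powr (p / j) + lam * Y powr (p / j)) powr (j / p)"
    using p j by (intro powr_mono2) auto
  then show ?thesis using p j XY by (simp add: powr_powr)
qed


theorem theorem1p1:
  fixes p lam :: real and j :: nat
  assumes "DIM('a::euclidean_space) \<ge> 3"
    and "2 \<le> j" and "j \<le> DIM('a) - 1"
    and "0 \<le> p" and "p < 1"
    and "0 < lam" and "lam < 1"
  shows "\<exists>K L :: 'a set. convex_body K \<and> convex_body L \<and>
           origin_symmetric K \<and> origin_symmetric L \<and>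
           intrinsic_volume j (Lp_comb p lam K L)
             < intrinsic_volume j K powr (1 - lam) * intrinsic_volume j L powr lam \<and>
           intrinsic_volume j K powr (1 - lam) * intrinsic_volume j L powr lam
             \<le> (if p = 0 then intrinsic_volume j K powr (1 - lam) * intrinsic_volume j L powr lam
                else ((1 - lam) * intrinsic_volume j K powr (p / real j)
                      + lam * intrinsic_volume j L powr (p / real j)) powr (real j / p))"
proof -
  note dim = assms(1) and j2 = assms(2) and jn = assms(3)
  note p = assms(4,5) and lam = assms(6,7)
  obtain b0 :: 'a where b0: "b0 \<in> Basis" using nonempty_Basis by blast
  define k where "k = DIM('a) - j"
  have k1: "1 \<le> k" and kn: "k < DIM('a)" using dim j2 jn by (auto simp: k_def)
  have nk: "DIM('a) - k = j" using jn dim by (simp add: k_def)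
  obtain N1 N2 where N: "N1 > 0" "N2 > 0" and EBs: "\<And>s. EB (cs b0 s) k = 2 ^ j * (N1 + s * N2)"
    using EB_special[OF b0 k1 kn] nk by auto
  obtain s t where st: "s > 0" "t > 0"
    and ineq: "N1 + N2 * Fm p lam s t < (N1 + N2 * s) powr (1 - lam) * (N1 + N2 * t) powr lam"
    using oneD[OF N lam p] by blast
  have cpos: "\<forall>b\<in>Basis. 0 < cs b0 r b" if "r > 0" for r using that by (auto simp: cs_def)
  have cnn: "\<forall>b\<in>Basis. 0 \<le> cs b0 r b" if "r > 0" for r using that by (auto simp: cs_def less_imp_le)
  have jle: "j \<le> DIM('a)" using jn by simp
  have IV: "intrinsic_volume j (boxc (cs b0 r) :: 'a set) = 2 ^ j * (N1 + r * N2)" if "r > 0" for r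
    using iv_box[OF cnn[OF that], of j] jle EBs by (simp add: k_def)
  define K :: "'a set" where "K = boxc (cs b0 s)"
  define L :: "'a set" where "L = boxc (cs b0 t)"
  have F: "Fm p lam s t > 0" using Fm_pos st lam by auto
  have M: "Lp_comb p lam K L = boxc (cs b0 (Fm p lam s t))"
    unfolding Lp_comb_Fm K_def L_def by (rule wulff_box[OF b0 st lam p])
  have VK: "intrinsic_volume j K = 2 ^ j * (N1 + s * N2)" unfolding K_def using IV st by simp
  have VL: "intrinsic_volume j L = 2 ^ j * (N1 + t * N2)" unfolding L_def using IV st by simp
  have VM: "intrinsic_volume j (Lp_comb p lam K L) = 2 ^ j * (N1 + Fm p lam s t * N2)"
    unfolding M using IV F by simp
  have pos1: "0 < N1 + s * N2" "0 < N1 + t * N2" using N st by (auto intro: add_pos_nonneg)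
  have first: "intrinsic_volume j (Lp_comb p lam K L)
      < intrinsic_volume j K powr (1 - lam) * intrinsic_volume j L powr lam"
  proof -
    have "intrinsic_volume j K powr (1 - lam) * intrinsic_volume j L powr lam
        = (((2::real) ^ j) powr (1 - lam) * (2 ^ j) powr lam) * ((N1 + s * N2) powr (1 - lam) * (N1 + t * N2) powr lam)"
      unfolding VK VL using pos1 by (simp add: powr_mult mult_ac)
    also have "((2::real) ^ j) powr (1 - lam) * (2 ^ j) powr lam = 2 ^ j"
      by (simp add: powr_add[symmetric])
    finally have eq: "intrinsic_volume j K powr (1 - lam) * intrinsic_volume j L powr lam
        = 2 ^ j * ((N1 + s * N2) powr (1 - lam) * (N1 + t * N2) powr lam)" .
    have "N1 + Fm p lam s t * N2 < (N1 + s * N2) powr (1 - lam) * (N1 + t * N2) powr lam"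
      using ineq by (simp add: mult_ac)
    then show ?thesis unfolding VM eq by simp
  qed
  have second: "intrinsic_volume j K powr (1 - lam) * intrinsic_volume j L powr lam
             \<le> (if p = 0 then intrinsic_volume j K powr (1 - lam) * intrinsic_volume j L powr lam
                else ((1 - lam) * intrinsic_volume j K powr (p / real j)
                      + lam * intrinsic_volume j L powr (p / real j)) powr (real j / p))"
  proof (cases "p = 0")
    case False
    have "0 < intrinsic_volume j K" "0 < intrinsic_volume j L" unfolding VK VL using pos1 by auto
    then show ?thesis using False gm_pm[of "intrinsic_volume j K" "intrinsic_volume j L" lam p j] lam p j2
      by simp
  qed simp
  have "convex_body K" "convex_body L" unfolding K_def L_def
    using boxc_convex_body cpos st by auto
  moreover have "origin_symmetric K" "origin_symmetric L" unfolding K_def L_def by (rule boxc_symmetric)+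
  ultimately show ?thesis using first second by blast
qed

end
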